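(* For $\xi = (\tau_L,\delta_L,\tau_R,\delta_R) \in \mathbb{R}^4$ let $$f_\xi(x,y) = \begin{cases} (\tau_L x + y + 1,\ -\delta_L x), & x \le 0,\\ (\tau_R x + y + 1,\ -\delta_R x), & x \ge 0,\end{cases}$$ and let $\Phi = \{\xi : \tau_L > |\delta_L + 1|,\ \tau_R < -|\delta_R+1|\}$. For $\xi\in\Phi$, the matrix $\begin{bmatrix}\tau_L & 1\\ -\delta_L & 0\end{bmatrix}$ has eigenvalues $\lambda_L^s,\lambda_L^u$ with $|\lambda_L^s|<1<\lambda_L^u$, and $\begin{bmatrix}\tau_R & 1\\ -\delta_R & 0\end{bmatrix}$ has eigenvalues $\lambda_R^s,\lambda_R^u$ with $|\lambda_R^s|<1$, $\lambda_R^u<-1$. Let $$\phi^+(\xi) = \delta_R - \big(\tau_R + \delta_L + \delta_R - (1+\tau_R)\lambda_L^u\big)\lambda_L^u,\qquad \phi^-(\xi) = \delta_R - \big(\delta_R + \tau_R - (1+\lambda_R^u)\lambda_L^u\big)\lambda_L^u,$$ $\phi_{\min}(\xi) = \min[\phi^+(\xi),\phi^-(\xi)]$, and $T = \left(\frac{1}{1-\lambda_R^s}, 0\right)$. If $\xi \in \Phi$ with $\phi_{\min}(\xi) > 0$ and $\lambda_L^s = \lambda_R^s$, then $f_\xi$ maps the line segment from $T$ to $f_\xi(T)$ into itself, and on this segment $f_\xi$ is conjugate to the skew tent map $$z \mapsto \begin{cases} \lambda_L^u z + 1, & z \le 0,\\ \lambda_R^u z + 1, & z \ge 0,\end{cases}$$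 restricted to the interval $[\lambda_R^u + 1, 1]$. *)

theory Defs
  imports "HOL-Analysis.Analysis"
begin

definition bcnf :: "real \<Rightarrow> real \<Rightarrow> real \<Rightarrow> real \<Rightarrow> real \<times> real \<Rightarrow> real \<times> real" where
  "bcnf tauL deltaL tauR deltaR p =
     (if fst p \<le> 0 then (tauL * fst p + snd p + 1, - deltaL * fst p)
      else (tauR * fst p + snd p + 1, - deltaR * fst p))"

definition in_Phi :: "real \<Rightarrow> real \<Rightarrow> real \<Rightarrow> real \<Rightarrow> bool" where
  "in_Phi tauL deltaL tauR deltaR \<longleftrightarrow> tauL > \<bar>deltaL + 1\<bar> \<and> tauR < - \<bar>deltaR + 1\<bar>"

definition jac :: "real \<Rightarrow> real \<Rightarrow> real^2^2" where
  "jac tau delta = vector [vector [tau, 1], vector [- delta, 0]]"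

definition is_eigenvalue :: "real^2^2 \<Rightarrow> real \<Rightarrow> bool" where
  "is_eigenvalue A lam \<longleftrightarrow> (\<exists>v. v \<noteq> 0 \<and> A *v v = lam *\<^sub>R v)"

definition phi_plus :: "real \<Rightarrow> real \<Rightarrow> real \<Rightarrow> real \<Rightarrow> real \<Rightarrow> real" where
  "phi_plus tauL deltaL tauR deltaR lLu =
     deltaR - (tauR + deltaL + deltaR - (1 + tauR) * lLu) * lLu"

definition phi_minus :: "real \<Rightarrow> real \<Rightarrow> real \<Rightarrow> real \<Rightarrow> real" where
  "phi_minus tauR deltaR lLu lRu =
     deltaR - (deltaR + tauR - (1 + lRu) * lLu) * lLu"

definition skew_tent :: "real \<Rightarrow> real \<Rightarrow> real \<Rightarrow> real" where
  "skew_tent a b z = (if z \<le> 0 then a * z + 1 else b * z + 1)"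

end

theory Submission
  imports Defs
begin

lemma eig_char:
  assumes "is_eigenvalue (jac tau delta) l"
  shows "l^2 - tau * l + delta = 0"
proof -
  obtain v where v: "v \<noteq> 0" "jac tau delta *v v = l *\<^sub>R v"
    using assms unfolding is_eigenvalue_def by blast
  have e1: "tau * v$1 + v$2 = l * v$1" and e2: "- delta * v$1 = l * v$2"
    using v(2) unfolding jac_def
    by (auto simp: vec_eq_iff matrix_vector_mult_def sum_2 forall_2 vector_def)
  have "v$1 \<noteq> 0"
  proof
    assume "v$1 = 0"
    with e1 have "v$2 = 0" by simp
    with \<open>v$1 = 0\<close> have "v = 0" by (simp add: vec_eq_iff forall_2)
    with v(1) show False by simp
  qed
  have "v$2 = (l - tau) * v$1" using e1 by (simp add: algebra_simps)
  with e2 have "(l^2 - tau * l + delta) * v$1 = 0"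
    by (simp add: algebra_simps power2_eq_square)
  with \<open>v$1 \<noteq> 0\<close> show ?thesis by simp
qed

lemma two_roots:
  fixes s L tau delta :: real
  assumes "s^2 - tau * s + delta = 0" "L^2 - tau * L + delta = 0" "s \<noteq> L"
  shows "tau = s + L \<and> delta = s * L"
proof -
  have "(s - L) * (s + L - tau) = 0" using assms(1,2)
    by (simp add: algebra_simps power2_eq_square)
  with assms(3) have t: "tau = s + L" by simp
  with assms(1) show ?thesis by (simp add: algebra_simps power2_eq_square)
qed

theorem proposition10p1:
  fixes tauL deltaL tauR deltaR lLs lLu lRs lRu :: real
  assumes "in_Phi tauL deltaL tauR deltaR"
    and "is_eigenvalue (jac tauL deltaL) lLs" and "is_eigenvalue (jac tauL deltaL) lLu"
    and "\<bar>lLs\<bar> < 1" and "1 < lLu"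
    and "is_eigenvalue (jac tauR deltaR) lRs" and "is_eigenvalue (jac tauR deltaR) lRu"
    and "\<bar>lRs\<bar> < 1" and "lRu < -1"
    and "min (phi_plus tauL deltaL tauR deltaR lLu) (phi_minus tauR deltaR lLu lRu) > 0"
    and "lLs = lRs"
  shows "bcnf tauL deltaL tauR deltaR `
           closed_segment (1 / (1 - lRs), 0) (bcnf tauL deltaL tauR deltaR (1 / (1 - lRs), 0))
         \<subseteq> closed_segment (1 / (1 - lRs), 0) (bcnf tauL deltaL tauR deltaR (1 / (1 - lRs), 0))
       \<and> (\<exists>h h'. homeomorphism
              (closed_segment (1 / (1 - lRs), 0) (bcnf tauL deltaL tauR deltaR (1 / (1 - lRs), 0)))
              {lRu + 1 .. 1} h h'
            \<and> (\<forall>p \<in> closed_segment (1 / (1 - lRs), 0) (bcnf tauL deltaL tauR deltaR (1 / (1 - lRs), 0)).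
                 h (bcnf tauL deltaL tauR deltaR p) = skew_tent lLu lRu (h p)))"
proof -
  define s where "s = lRs"
  define L where "L = lLu"
  define R where "R = lRu"
  define f where "f = bcnf tauL deltaL tauR deltaR"
  define c where "c = 1 / (1 - s)"
  have s1: "s < 1" "-1 < s" using assms(8) unfolding s_def by auto
  have cpos: "c > 0" using s1 unfolding c_def by simp
  have sc: "s * c + 1 = c" using s1 unfolding c_def by (simp add: field_simps)
  have hc: "(1 - s) * c = 1" using s1 unfolding c_def by simp
  have L: "tauL = s + L \<and> deltaL = s * L"
    using two_roots[OF eig_char[OF assms(2)] eig_char[OF assms(3)]] assms(4,5,11)
    unfolding s_def L_def by auto
  have R: "tauR = s + R \<and> deltaR = s * R"
    using two_roots[OF eig_char[OF assms(6)] eig_char[OF assms(7)]] assms(8,9)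
    unfolding s_def R_def by auto
  have pm: "phi_minus tauR deltaR lLu lRu = (L - s) * ((1 + R) * L - R)"
    using R unfolding phi_minus_def L_def R_def by (simp add: algebra_simps)
  have "phi_minus tauR deltaR lLu lRu > 0" using assms(10) by simp
  moreover have "L - s > 0" using s1 assms(5) unfolding L_def by simp
  ultimately have cond: "(1 + R) * L - R > 0" unfolding pm
    using zero_less_mult_pos by blast
  define H where "H = (\<lambda>z::real. (c * z, s * c - s * c * z))"
  define h where "h = (\<lambda>p::real\<times>real. (1 - s) * fst p)"
  have key: "f (H z) = H (skew_tent L R z)" for z
  proof (cases "z \<le> 0")
    case True
    then have "c * z \<le> 0" using cpos by (simp add: mult_nonneg_nonpos)
    then show ?thesis using True L sc unfolding f_def bcnf_def H_def skew_tent_def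
      by (simp add: algebra_simps)
  next
    case False
    then have "\<not> c * z \<le> 0" using cpos by (simp add: not_le)
    then show ?thesis using False R sc unfolding f_def bcnf_def H_def skew_tent_def
      by (simp add: algebra_simps)
  qed
  have hH: "h (H z) = z" for z using hc unfolding h_def H_def by simp
  have T: "(1 / (1 - lRs), 0) = H 1" unfolding H_def c_def s_def by simp
  have fT: "f (H 1) = H (R + 1)" using key[of 1] unfolding skew_tent_def by (simp add: add.commute)
  define S where "S = closed_segment (H 1) (H (R + 1))"
  have Seq: "S = H ` {R + 1 .. 1}"
  proof
    show "S \<subseteq> H ` {R + 1 .. 1}"
    proof
      fix p assume "p \<in> S"
      then obtain u where u: "0 \<le> u" "u \<le> 1" "p = (1 - u) *\<^sub>R H 1 + u *\<^sub>R H (R + 1)"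
        unfolding S_def closed_segment_def by blast
      have "p = H (1 + u * R)" using u(3) unfolding H_def
        by (simp add: algebra_simps)
      moreover have "1 + u * R \<in> {R + 1 .. 1}" using u assms(9) unfolding R_def
        by (auto simp: mult_nonneg_nonpos)
      ultimately show "p \<in> H ` {R + 1 .. 1}" by blast
    qed
  next
    show "H ` {R + 1 .. 1} \<subseteq> S"
    proof
      fix p assume "p \<in> H ` {R + 1 .. 1}"
      then obtain z where z: "z \<in> {R + 1 .. 1}" "p = H z" by blast
      define u where "u = (1 - z) / (- R)"
      have Rn: "R < 0" using assms(9) unfolding R_def by simp
      have u01: "0 \<le> u" "u \<le> 1" using z Rn unfolding u_def by (auto simp: field_simps)
      have zu: "z = 1 + u * R" using Rn unfolding u_def by (simp add: field_simps)
      have "p = (1 - u) *\<^sub>R H 1 + u *\<^sub>R H (R + 1)" using z(2) zu unfolding H_def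
        by (simp add: algebra_simps)
      then show "p \<in> S" unfolding S_def closed_segment_def using u01 by blast
    qed
  qed
  have skew_in: "skew_tent L R z \<in> {R + 1 .. 1}" if "z \<in> {R + 1 .. 1}" for z
  proof (cases "z \<le> 0")
    case True
    have "L * z \<ge> L * (R + 1)" using that assms(5) unfolding L_def by simp
    moreover have "L * z \<le> 0" using True assms(5) unfolding L_def
      by (simp add: mult_nonneg_nonpos)
    moreover have "L * (R + 1) > R" using cond by (simp add: distrib_left distrib_right mult.commute)
    ultimately have "L * z + 1 \<in> {R + 1 .. 1}" by simp
    then show ?thesis using True unfolding skew_tent_def by simp
  next
    case False
    have "R * (z - 1) \<ge> 0" using that assms(9) unfolding R_def
      by (intro mult_nonpos_nonpos) auto
    then have "R * z \<ge> R" by (simp add: right_diff_distrib)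
    moreover have "R * z \<le> 0" using False assms(9) unfolding R_def
      by (simp add: mult_nonpos_nonneg)
    ultimately show ?thesis using False unfolding skew_tent_def by auto
  qed
  have part1: "f ` S \<subseteq> S"
  proof
    fix q assume "q \<in> f ` S"
    then obtain z where z: "z \<in> {R + 1 .. 1}" "q = f (H z)" unfolding Seq by blast
    then have "q = H (skew_tent L R z)" using key by simp
    then show "q \<in> S" unfolding Seq using skew_in[OF z(1)] by blast
  qed
  have homeo: "homeomorphism S {R + 1 .. 1} h H"
    unfolding homeomorphism_def
  proof (intro conjI)
    show "\<forall>x\<in>S. H (h x) = x" unfolding Seq using hH by auto
    show "h ` S = {R + 1 .. 1}" unfolding Seq image_image hH by simp
    show "continuous_on S h" unfolding h_def by (intro continuous_intros)
    show "\<forall>y\<in>{R + 1..1}. h (H y) = y" using hH by simp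
    show "H ` {R + 1..1} = S" using Seq by simp
    show "continuous_on {R + 1..1} H" unfolding H_def by (intro continuous_intros)
  qed
  have conj: "\<forall>p\<in>S. h (f p) = skew_tent L R (h p)"
    unfolding Seq using key hH by auto
  have S_eq: "closed_segment (1 / (1 - lRs), 0) (bcnf tauL deltaL tauR deltaR (1 / (1 - lRs), 0)) = S"
    unfolding T S_def using fT unfolding f_def by simp
  show ?thesis unfolding S_eq
    using part1 homeo conj unfolding f_def L_def R_def by blast
qed

end
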